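(* Let $X$ be a countably infinite set. The lattice $\mathrm{Cl}_{loc}(X)$ of local clones on $X$ embeds as a partial order into the power set of $\omega$ ordered by inclusion. In particular, $\mathrm{Cl}_{loc}(X)$ contains no uncountable ascending chains and no uncountable descending chains.
   Context: A clone on $X$ is a set of finitary operations $X^n\to X$ ($n\ge1$) containing all projections $\pi^n_k(x_1,\dots,x_n)=x_k$ and closed under composition. Giving $X$ the discrete topology and $X^{X^n}$ the product topology, a clone is local if for each $n$ its set of $n$-ary operations is closed in $X^{X^n}$; equivalently, an $n$-ary operation $g$ belongs to the clone whenever for every finite $B\subseteq X^n$ some $n$-ary operation of the clone agrees with $g$ on $B$. $\mathrm{Cl}_{loc}(X)$ is the complete lattice of local clones on $X$ ordered by inclusion. An order embedding is a map $e$ with $a\le b\iff e(a)\le e(b)$. *)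

theory Defs
  imports Main "HOL-Library.Countable_Set"
begin

text \<open>An n-ary operation on the carrier UNIV :: 'a is represented by a function on
  lists which is only meaningful on lists of length n and equals undefined elsewhere.\<close>

definition nary_ops :: "nat \<Rightarrow> ('a list \<Rightarrow> 'a) set" where
  "nary_ops n = {f. \<forall>xs. length xs \<noteq> n \<longrightarrow> f xs = undefined}"

definition proj_op :: "nat \<Rightarrow> nat \<Rightarrow> 'a list \<Rightarrow> 'a" where
  "proj_op n k = (\<lambda>xs. if length xs = n then xs ! k else undefined)"

definition comp_op :: "nat \<Rightarrow> ('a list \<Rightarrow> 'a) \<Rightarrow> ('a list \<Rightarrow> 'a) list \<Rightarrow> 'a list \<Rightarrow> 'a" where
  "comp_op n f gs = (\<lambda>xs. if length xs = n then f (map (\<lambda>g. g xs) gs) else undefined)"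

definition is_clone :: "(nat \<Rightarrow> ('a list \<Rightarrow> 'a) set) \<Rightarrow> bool" where
  "is_clone C \<longleftrightarrow>
     C 0 = {} \<and>
     (\<forall>n. C n \<subseteq> nary_ops n) \<and>
     (\<forall>n k. 1 \<le> n \<and> k < n \<longrightarrow> proj_op n k \<in> C n) \<and>
     (\<forall>m n f gs. 1 \<le> n \<and> f \<in> C m \<and> length gs = m \<and> set gs \<subseteq> C n
        \<longrightarrow> comp_op n f gs \<in> C n)"

definition is_local_clone :: "(nat \<Rightarrow> ('a list \<Rightarrow> 'a) set) \<Rightarrow> bool" where
  "is_local_clone C \<longleftrightarrow> is_clone C \<and>
     (\<forall>n. \<forall>g \<in> nary_ops n. n \<ge> 1 \<longrightarrow>
        (\<forall>B. finite B \<and> B \<subseteq> {xs. length xs = n} \<longrightarrow> (\<exists>f \<in> C n. \<forall>xs\<in>B. f xs = g xs))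
        \<longrightarrow> g \<in> C n)"

definition local_clones :: "(nat \<Rightarrow> ('a list \<Rightarrow> 'a) set) set" where
  "local_clones = {C. is_local_clone C}"

end

theory Submission
  imports Defs
begin

lemma chain_wf_countable_gen:
  fixes K :: "'b set" and e :: "'b \<Rightarrow> nat set"
  assumes emb: "\<forall>C\<in>K. \<forall>D\<in>K. le C D \<longleftrightarrow> e C \<subseteq> e D"
    and lt: "\<forall>C\<in>K. \<forall>D\<in>K. lt C D \<longleftrightarrow> le C D \<and> C \<noteq> D"
    and anti: "\<forall>C\<in>K. \<forall>D\<in>K. le C D \<and> le D C \<longrightarrow> C = D"
    and chain: "\<forall>C\<in>K. \<forall>D\<in>K. le C D \<or> le D C"
    and wfr: "wf {(C, D). C \<in> K \<and> D \<in> K \<and> lt C D}"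
  shows "countable K"
proof -
  define R where "R = {(C, D). C \<in> K \<and> D \<in> K \<and> lt C D}"
  have succ_ex: "\<exists>S. S \<in> K \<and> lt C S \<and> (\<forall>D. (D, S) \<in> R \<longrightarrow> D \<notin> {D\<in>K. lt C D})"
    if "C \<in> K" "\<exists>D\<in>K. lt C D" for C
  proof -
    from that obtain D where "D \<in> {D\<in>K. lt C D}" by auto
    from wfE_min[OF wfr[folded R_def] this] show ?thesis by blast
  qed
  define succ where "succ C = (SOME S. S \<in> K \<and> lt C S \<and> (\<forall>D. (D, S) \<in> R \<longrightarrow> D \<notin> {D\<in>K. lt C D}))" for C
  have succ: "succ C \<in> K \<and> lt C (succ C) \<and> (\<forall>D. (D, succ C) \<in> R \<longrightarrow> D \<notin> {D\<in>K. lt C D})"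
    if "C \<in> K" "\<exists>D\<in>K. lt C D" for C
    unfolding succ_def by (rule someI_ex[OF succ_ex[OF that]])
  define h where "h C = (if \<exists>D\<in>K. lt C D then Some (SOME n. n \<in> e (succ C) - e C) else None)" for C
  have hin: "h C = Some (SOME n. n \<in> e (succ C) - e C) \<and> (SOME n. n \<in> e (succ C) - e C) \<in> e (succ C) - e C"
    if "C \<in> K" "\<exists>D\<in>K. lt C D" for C
  proof -
    have s: "succ C \<in> K" "lt C (succ C)" using succ[OF that] by auto
    have "\<not> e (succ C) \<subseteq> e C"
    proof
      assume "e (succ C) \<subseteq> e C"
      then have "le (succ C) C" using emb s that by auto
      moreover have "le C (succ C)" "C \<noteq> succ C" using lt s that by auto
      ultimately show False using anti s that by auto
    qed
    then have "\<exists>n. n \<in> e (succ C) - e C" by auto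
    then have "(SOME n. n \<in> e (succ C) - e C) \<in> e (succ C) - e C" by (rule someI_ex)
    then show ?thesis using that unfolding h_def by auto
  qed
  have key: "h C \<noteq> h C'" if tC: "C \<in> K" "C' \<in> K" "lt C C'" for C C'
  proof -
    have ex: "\<exists>D\<in>K. lt C D" using that by auto
    note s = succ[OF that(1) ex]
    have "le (succ C) C'"
    proof (rule ccontr)
      assume "\<not> le (succ C) C'"
      then have "le C' (succ C)" "C' \<noteq> succ C" using chain s that emb by auto
      then have "(C', succ C) \<in> R" using lt s that unfolding R_def by auto
      then show False using s that by auto
    qed
    then have sub: "e (succ C) \<subseteq> e C'" using emb s that by auto
    obtain n where hn: "h C = Some n" "n \<in> e C'" using hin[OF tC(1) ex] sub by auto
    show ?thesis
    proof (cases "\<exists>D\<in>K. lt C' D")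
      case True then show ?thesis using hin[OF tC(2) True] hn by auto
    next
      case False then show ?thesis using hn unfolding h_def by auto
    qed
  qed
  have "inj_on h K"
  proof (rule inj_onI)
    fix C C' assume a: "C \<in> K" "C' \<in> K" "h C = h C'"
    show "C = C'"
    proof (rule ccontr)
      assume "C \<noteq> C'"
      then have "lt C C' \<or> lt C' C" using chain lt a by auto
      then show False using key a by metis
    qed
  qed
  then show ?thesis by (rule countableI')
qed

definition pat :: "(nat \<Rightarrow> ('a list \<Rightarrow> 'a) set) \<Rightarrow> (nat \<times> ('a list \<times> 'a) list) set" where
  "pat C = {(n, ps). \<exists>f\<in>C n. \<forall>p\<in>set ps. f (fst p) = snd p}"

lemma pat_mono: "C \<le> D \<Longrightarrow> pat C \<subseteq> pat D"
  unfolding pat_def le_fun_def by blast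

lemma pat_refl:
  assumes "is_local_clone C" "is_local_clone D" "pat C \<subseteq> pat D"
  shows "C \<le> D"
proof -
  have "C n \<subseteq> D n" for n
  proof
    fix g assume g: "g \<in> C n"
    have n1: "n \<ge> 1" using g assms(1) unfolding is_local_clone_def is_clone_def
      by (cases n) auto
    have gn: "g \<in> nary_ops n" using g assms(1) unfolding is_local_clone_def is_clone_def by auto
    have "\<exists>f \<in> D n. \<forall>xs\<in>B. f xs = g xs" if "finite B" for B :: "'a list set"
    proof -
      obtain bs where bs: "set bs = B" using finite_list[OF \<open>finite B\<close>] by auto
      have "(n, map (\<lambda>xs. (xs, g xs)) bs) \<in> pat C" unfolding pat_def using g by auto
      then have "(n, map (\<lambda>xs. (xs, g xs)) bs) \<in> pat D" using assms(3) by auto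
      then show ?thesis unfolding pat_def using bs by auto
    qed
    then show "g \<in> D n" using assms(2) gn n1 unfolding is_local_clone_def by blast
  qed
  then show ?thesis by (simp add: le_fun_def)
qed

theorem proposition2p6:
  assumes "countable (UNIV :: 'a set)" and "infinite (UNIV :: 'a set)"
  shows "(\<exists>e :: (nat \<Rightarrow> ('a list \<Rightarrow> 'a) set) \<Rightarrow> nat set.
            \<forall>C \<in> (local_clones :: (nat \<Rightarrow> ('a list \<Rightarrow> 'a) set) set). \<forall>D \<in> local_clones.
              C \<le> D \<longleftrightarrow> e C \<subseteq> e D)
       \<and> (\<forall>K \<subseteq> (local_clones :: (nat \<Rightarrow> ('a list \<Rightarrow> 'a) set) set).
            (\<forall>C\<in>K. \<forall>D\<in>K. C \<le> D \<or> D \<le> C) \<and> wf {(C, D). C \<in> K \<and> D \<in> K \<and> C < D}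
            \<longrightarrow> countable K)
       \<and> (\<forall>K \<subseteq> (local_clones :: (nat \<Rightarrow> ('a list \<Rightarrow> 'a) set) set).
            (\<forall>C\<in>K. \<forall>D\<in>K. C \<le> D \<or> D \<le> C) \<and> wf {(C, D). C \<in> K \<and> D \<in> K \<and> D < C}
            \<longrightarrow> countable K)"
proof -
  let ?P = "UNIV :: (nat \<times> ('a list \<times> 'a) list) set"
  have cl: "countable (UNIV :: 'a list set)"
    using countable_lists[OF assms(1)] by (simp add: lists_UNIV)
  have cp: "countable (UNIV :: ('a list \<times> 'a) set)"
    using countable_SIGMA[OF cl, of "\<lambda>_. UNIV"] assms(1) by (simp add: UNIV_Times_UNIV[symmetric] del: UNIV_Times_UNIV)
  have cpl: "countable (UNIV :: ('a list \<times> 'a) list set)"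
    using countable_lists[OF cp] by (simp add: lists_UNIV)
  have cP: "countable ?P"
    using countable_SIGMA[of "UNIV :: nat set" "\<lambda>_. UNIV :: ('a list \<times> 'a) list set"] cpl
    by (simp add: UNIV_Times_UNIV[symmetric] del: UNIV_Times_UNIV)
  define e :: "(nat \<Rightarrow> ('a list \<Rightarrow> 'a) set) \<Rightarrow> nat set" where
    "e C = to_nat_on ?P ` pat C" for C
  have inj: "inj (to_nat_on ?P)" using inj_on_to_nat_on[OF cP] .
  have emb: "\<forall>C \<in> (local_clones :: (nat \<Rightarrow> ('a list \<Rightarrow> 'a) set) set). \<forall>D \<in> local_clones.
              C \<le> D \<longleftrightarrow> e C \<subseteq> e D"
  proof (intro ballI)
    fix C D :: "nat \<Rightarrow> ('a list \<Rightarrow> 'a) set" assume "C \<in> local_clones" "D \<in> local_clones"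
    then have l: "is_local_clone C" "is_local_clone D" unfolding local_clones_def by auto
    have "e C \<subseteq> e D \<longleftrightarrow> pat C \<subseteq> pat D" unfolding e_def using inj
      by (simp add: inj_image_subset_iff)
    then show "C \<le> D \<longleftrightarrow> e C \<subseteq> e D" using pat_mono pat_refl[OF l] by blast
  qed
  have c1: "countable K" if K: "K \<subseteq> local_clones" "\<forall>C\<in>K. \<forall>D\<in>K. C \<le> D \<or> D \<le> C"
     "wf {(C, D). C \<in> K \<and> D \<in> K \<and> C < D}" for K :: "(nat \<Rightarrow> ('a list \<Rightarrow> 'a) set) set"
  proof (rule chain_wf_countable_gen[where e=e and le="(\<le>)" and lt="(<)"])
    show "\<forall>C\<in>K. \<forall>D\<in>K. (C \<le> D) = (e C \<subseteq> e D)"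
    proof (intro ballI)
      fix C D assume "C \<in> K" "D \<in> K"
      then have "C \<in> local_clones" "D \<in> local_clones" using K(1) by (auto simp only: subset_iff)
      then show "(C \<le> D) = (e C \<subseteq> e D)" by (rule emb[rule_format])
    qed
    show "\<forall>C\<in>K. \<forall>D\<in>K. (C < D) = (C \<le> D \<and> C \<noteq> D)" by (intro ballI) (rule less_le)
    show "\<forall>C\<in>K. \<forall>D\<in>K. C \<le> D \<and> D \<le> C \<longrightarrow> C = D"
      by (intro ballI impI) (erule conjE, erule (1) order.antisym)
    show "\<forall>C\<in>K. \<forall>D\<in>K. C \<le> D \<or> D \<le> C" by (rule K(2))
    show "wf {(C, D). C \<in> K \<and> D \<in> K \<and> C < D}" by (rule K(3))
  qed
  have c2: "countable K" if K: "K \<subseteq> local_clones" "\<forall>C\<in>K. \<forall>D\<in>K. C \<le> D \<or> D \<le> C"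
     "wf {(C, D). C \<in> K \<and> D \<in> K \<and> D < C}" for K :: "(nat \<Rightarrow> ('a list \<Rightarrow> 'a) set) set"
  proof (rule chain_wf_countable_gen[where e="\<lambda>C. - e C" and le="\<lambda>C D. D \<le> C" and lt="\<lambda>C D. D < C"])
    show "\<forall>C\<in>K. \<forall>D\<in>K. (D \<le> C) = (- e C \<subseteq> - e D)"
    proof (intro ballI)
      fix C D assume "C \<in> K" "D \<in> K"
      then have "D \<in> local_clones" "C \<in> local_clones" using K(1) by (auto simp only: subset_iff)
      then have "(D \<le> C) = (e D \<subseteq> e C)" by (rule emb[rule_format])
      then show "(D \<le> C) = (- e C \<subseteq> - e D)" by (simp only: Compl_subset_Compl_iff)
    qed
    show "\<forall>C\<in>K. \<forall>D\<in>K. (D < C) = (D \<le> C \<and> C \<noteq> D)"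
      by (intro ballI) (metis less_le)
    show "\<forall>C\<in>K. \<forall>D\<in>K. D \<le> C \<and> C \<le> D \<longrightarrow> C = D"
      by (intro ballI impI) (erule conjE, rule order.antisym, assumption+)
    show "\<forall>C\<in>K. \<forall>D\<in>K. D \<le> C \<or> C \<le> D" using K(2) by blast
    show "wf {(C, D). C \<in> K \<and> D \<in> K \<and> D < C}" by (rule K(3))
  qed
  show ?thesis
  proof (intro conjI allI impI)
    show "\<exists>e :: (nat \<Rightarrow> ('a list \<Rightarrow> 'a) set) \<Rightarrow> nat set.
            \<forall>C \<in> (local_clones :: (nat \<Rightarrow> ('a list \<Rightarrow> 'a) set) set). \<forall>D \<in> local_clones.
              C \<le> D \<longleftrightarrow> e C \<subseteq> e D" by (rule exI[of _ e]) (rule emb)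
  next
    fix K :: "(nat \<Rightarrow> ('a list \<Rightarrow> 'a) set) set"
    assume "K \<subseteq> local_clones" "(\<forall>C\<in>K. \<forall>D\<in>K. C \<le> D \<or> D \<le> C) \<and> wf {(C, D). C \<in> K \<and> D \<in> K \<and> C < D}"
    then show "countable K" by (intro c1) (erule conjE | assumption)+
  next
    fix K :: "(nat \<Rightarrow> ('a list \<Rightarrow> 'a) set) set"
    assume "K \<subseteq> local_clones" "(\<forall>C\<in>K. \<forall>D\<in>K. C \<le> D \<or> D \<le> C) \<and> wf {(C, D). C \<in> K \<and> D \<in> K \<and> D < C}"
    then show "countable K" by (intro c2) (erule conjE | assumption)+
  qed
qed

end
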